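(* Let $\Psi$ be the endofunctor on digraphs defined as follows: for a digraph $H$, the vertices of $\Psi H$ are the arcs of $H$, and $((a,b),(c,d))$ is an arc of $\Psi H$ iff $(b,c)$ is an arc of $H$ (equivalently, $(a,b),(b,c),(c,d)$ is a directed walk of length 3 in $H$). Let $\mathcal T$ be a set of oriented trees that is a complete set of obstructions for a digraph $H$. Then the set $\Psi\text{-Sproink}(\mathcal T)=\{T/{\sim_b},\ T/{\sim_r} : T\in\mathcal T\}$ (each with loops removed) is a complete set of obstructions for $\Psi H$.
   Context: Digraphs are finite; homomorphisms are arc-preserving vertex maps. A set $\mathcal F$ is a complete set of obstructions for $H$ if for all digraphs $G$: $G\to H$ iff no $F\in\mathcal F$ admits a homomorphism to $G$. An oriented tree is a digraph whose underlying undirected graph is a tree; its algebraic height $h$ is the minimum number of arcs of a directed path $\vec P_h$ (vertices $0,\dots,h$, arcs $(i,i+1)$) to which it maps. For an oriented tree $T$ of algebraic height $h$ let $t:T\to\vec P_h$ be the unique such homomorphism (for $T$ connected with at least one arc). Blue arcs of $T$ are arcs $(x,y)$ with $t(x)$ even; red arcs are arcs $(x,y)$ with $t(x)$ odd. $x\sim_b y$ iff the (undirected) path in $T$ from $x$ to $y$ consists only of blue arcs; $x\sim_r y$ iff it consists only of red arcs. For an equivalence $\sim$, the quotient $T/{\sim}$ has the classes as vertices and $(X,Y)$ an arc iff some $x\in X,y\in Y$ have $(x,y)\in A(T)$; "with loops removed" means arcs $(X,X)$ are deleted. *)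

theory Defs
  imports Main
begin

text \<open>A digraph is a pair (vertex set, arc set); loops are allowed.\<close>
type_synonym 'a digraph = "'a set \<times> ('a \<times> 'a) set"

definition verts :: "'a digraph \<Rightarrow> 'a set" where "verts G = fst G"
definition arcs :: "'a digraph \<Rightarrow> ('a \<times> 'a) set" where "arcs G = snd G"

definition wf_digraph :: "'a digraph \<Rightarrow> bool" where
  "wf_digraph G \<longleftrightarrow> finite (verts G) \<and> arcs G \<subseteq> verts G \<times> verts G"

definition is_hom :: "'a digraph \<Rightarrow> 'b digraph \<Rightarrow> ('a \<Rightarrow> 'b) \<Rightarrow> bool" where
  "is_hom G H f \<longleftrightarrow> f ` verts G \<subseteq> verts H \<and>
     (\<forall>x y. (x, y) \<in> arcs G \<longrightarrow> (f x, f y) \<in> arcs H)"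

definition hom_to :: "'a digraph \<Rightarrow> 'b digraph \<Rightarrow> bool" where
  "hom_to G H \<longleftrightarrow> (\<exists>f. is_hom G H f)"

text \<open>Complete set of obstructions. The test digraphs G range over all finite
  digraphs whose vertices are natural numbers; every finite digraph is isomorphic
  to such a digraph.\<close>
definition complete_obs :: "'b digraph set \<Rightarrow> 'h digraph \<Rightarrow> bool" where
  "complete_obs F H \<longleftrightarrow> (\<forall>G :: nat digraph. wf_digraph G \<longrightarrow>
       (hom_to G H \<longleftrightarrow> \<not> (\<exists>T\<in>F. hom_to T G)))"

definition undir :: "('a \<times> 'a) set \<Rightarrow> ('a \<times> 'a) set" where
  "undir A = A \<union> A\<inverse>"

definition oriented_tree :: "'a digraph \<Rightarrow> bool" where
  "oriented_tree T \<longleftrightarrow> wf_digraph T \<and> verts T \<noteq> {} \<and>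
     (\<forall>x y. (x, y) \<in> arcs T \<longrightarrow> (y, x) \<notin> arcs T) \<and>
     (\<forall>x. (x, x) \<notin> arcs T) \<and>
     (\<forall>x\<in>verts T. \<forall>y\<in>verts T. (x, y) \<in> (undir (arcs T))\<^sup>*) \<and>
     card (arcs T) = card (verts T) - 1"

definition dipath :: "nat \<Rightarrow> nat digraph" where
  "dipath h = ({0..h}, {(i, Suc i) | i. i < h})"

definition alg_height :: "'a digraph \<Rightarrow> nat" where
  "alg_height T = (LEAST h. hom_to T (dipath h))"

text \<open>The (unique, for connected T with an arc) homomorphism t : T \<rightarrow> P_h.\<close>
definition height_map :: "'a digraph \<Rightarrow> 'a \<Rightarrow> nat" where
  "height_map T = (SOME f. is_hom T (dipath (alg_height T)) f)"

definition blue_arcs :: "'a digraph \<Rightarrow> ('a \<times> 'a) set" where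
  "blue_arcs T = {(x, y). (x, y) \<in> arcs T \<and> even (height_map T x)}"

definition red_arcs :: "'a digraph \<Rightarrow> ('a \<times> 'a) set" where
  "red_arcs T = {(x, y). (x, y) \<in> arcs T \<and> odd (height_map T x)}"

text \<open>x ~ y iff the (unique, T being a tree) undirected path from x to y in T
  uses only arcs from the given set S, i.e. x, y are connected in the undirected
  subgraph spanned by S.\<close>
definition path_equiv :: "'a digraph \<Rightarrow> ('a \<times> 'a) set \<Rightarrow> ('a \<times> 'a) set" where
  "path_equiv T S = {(x, y). x \<in> verts T \<and> y \<in> verts T \<and> (x, y) \<in> (undir S)\<^sup>*}"

definition sim_b :: "'a digraph \<Rightarrow> ('a \<times> 'a) set" where
  "sim_b T = path_equiv T (blue_arcs T)"

definition sim_r :: "'a digraph \<Rightarrow> ('a \<times> 'a) set" where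
  "sim_r T = path_equiv T (red_arcs T)"

definition quot_noloops :: "'a digraph \<Rightarrow> ('a \<times> 'a) set \<Rightarrow> 'a set digraph" where
  "quot_noloops T R = (verts T // R,
     {(X, Y). X \<in> verts T // R \<and> Y \<in> verts T // R \<and> X \<noteq> Y \<and>
              (\<exists>x\<in>X. \<exists>y\<in>Y. (x, y) \<in> arcs T)})"

definition Psi :: "'a digraph \<Rightarrow> ('a \<times> 'a) digraph" where
  "Psi H = (arcs H, {((a, b), (c, d)). (a, b) \<in> arcs H \<and> (c, d) \<in> arcs H \<and> (b, c) \<in> arcs H})"

definition Psi_sproink :: "'a digraph set \<Rightarrow> 'a set digraph set" where
  "Psi_sproink \<T> = (\<lambda>T. quot_noloops T (sim_b T)) ` \<T> \<union> (\<lambda>T. quot_noloops T (sim_r T)) ` \<T>"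

end

theory Submission
  imports Defs
begin


lemma undir_sym_rtrancl:
  assumes "(x,y) \<in> (undir S)\<^sup>*" shows "(y,x) \<in> (undir S)\<^sup>*"
  using assms
proof (induction rule: rtrancl_induct)
  case base then show ?case by simp
next
  case (step z y)
  then have "(y,z) \<in> undir S" by (auto simp: undir_def)
  then show ?case using step.IH by (rule converse_rtrancl_into_rtrancl)
qed

lemma inv_walk:
  assumes "(x,y) \<in> (undir S)\<^sup>*" "\<And>a b. (a,b)\<in>S \<Longrightarrow> F a = F b"
  shows "F x = F y"
  using assms(1)
proof (induction rule: rtrancl_induct)
  case base then show ?case by simp
next
  case (step z y)
  then have "(z,y) \<in> S \<or> (y,z) \<in> S" by (auto simp: undir_def)
  then have "F z = F y" using assms(2) by metis
  then show ?case using step.IH by simp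
qed

lemma tree_potential:
  assumes "finite V" "A \<subseteq> V \<times> V" "\<forall>x. (x,x) \<notin> A"
    "\<forall>x\<in>V. \<forall>y\<in>V. (x,y) \<in> (undir A)\<^sup>*" "card A = card V - 1"
  shows "\<exists>f::'a \<Rightarrow> int. \<forall>x y. (x,y) \<in> A \<longrightarrow> f y = f x + 1"
  using assms
proof (induction "card V" arbitrary: V A rule: less_induct)
  case less
  have finA: "finite A" using less.prems(1,2) finite_subset by blast
  show ?case
  proof (cases "card V \<le> 1")
    case True
    then have "A = {}" using less.prems(5) finA by auto
    then show ?thesis by auto
  next
    case False
    hence n2: "card V \<ge> 2" by simp
    define D where "D v = {a\<in>A. fst a = v \<or> snd a = v}" for v
    have Dsplit: "card (D v) = card {a\<in>A. fst a = v} + card {a\<in>A. snd a = v}" for v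
    proof -
      have "D v = {a\<in>A. fst a = v} \<union> {a\<in>A. snd a = v}" unfolding D_def by auto
      moreover have "{a\<in>A. fst a = v} \<inter> {a\<in>A. snd a = v} = {}" using less.prems(3) by auto
      ultimately show ?thesis using finA by (simp add: card_Un_disjoint)
    qed
    have s1: "(\<Sum>v\<in>V. card {a\<in>A. fst a = v}) = card A"
    proof -
      have "A = (\<Union>v\<in>V. {a\<in>A. fst a = v})" using less.prems(2) by auto
      moreover have "card (\<Union>v\<in>V. {a\<in>A. fst a = v}) = (\<Sum>v\<in>V. card {a\<in>A. fst a = v})"
        by (rule card_UN_disjoint) (use less.prems(1) finA in auto)
      ultimately show ?thesis by simp
    qed
    have s2: "(\<Sum>v\<in>V. card {a\<in>A. snd a = v}) = card A"
    proof -
      have "A = (\<Union>v\<in>V. {a\<in>A. snd a = v})" using less.prems(2) by auto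
      moreover have "card (\<Union>v\<in>V. {a\<in>A. snd a = v}) = (\<Sum>v\<in>V. card {a\<in>A. snd a = v})"
        by (rule card_UN_disjoint) (use less.prems(1) finA in auto)
      ultimately show ?thesis by simp
    qed
    have sD: "(\<Sum>v\<in>V. card (D v)) = 2 * card A" using s1 s2 Dsplit by (simp add: sum.distrib)
    have "\<exists>v\<in>V. card (D v) \<le> 1"
    proof (rule ccontr)
      assume "\<not> ?thesis"
      then have "(\<Sum>v\<in>V. (2::nat)) \<le> (\<Sum>v\<in>V. card (D v))" by (intro sum_mono) auto
      then show False using sD less.prems(5) n2 by simp
    qed
    then obtain v where v: "v \<in> V" "card (D v) \<le> 1" by blast
    have "\<not> V \<subseteq> {v}" using n2 card_mono[of "{v}" V] by auto
    then obtain u where u: "u \<in> V" "u \<noteq> v" by auto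
    have "(v,u) \<in> (undir A)\<^sup>*" using less.prems(4) u v by blast
    then obtain w0 where "(v,w0) \<in> undir A" using u(2) by (metis converse_rtranclE)
    then have "D v \<noteq> {}" unfolding D_def undir_def by force
    moreover have "finite (D v)" using finA unfolding D_def by auto
    ultimately have "card (D v) = 1" using v(2) by (metis One_nat_def card_0_eq le_SucE le_zero_eq)
    then obtain a where Da: "D v = {a}" by (rule card_1_singletonE)
    have key: "\<And>b. b \<in> A \<Longrightarrow> fst b = v \<or> snd b = v \<Longrightarrow> b = a"
      using Da unfolding D_def by blast
    have aA: "a \<in> A" "fst a = v \<or> snd a = v" using Da unfolding D_def by auto
    obtain w where aw: "a = (v,w) \<or> a = (w,v)" "w \<noteq> v" "w \<in> V"
    proof (cases a)
      case (Pair a1 a2)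
      then have "a1 \<in> V" "a2 \<in> V" "a1 \<noteq> a2" using aA less.prems(2,3) by auto
      then show ?thesis using that aA Pair by auto
    qed
    define V' where "V' = V - {v}"
    define A' where "A' = A - {a}"
    have cV': "card V' = card V - 1" unfolding V'_def using v(1) less.prems(1) by simp
    have cA': "card A' = card V' - 1" unfolding A'_def using aA(1) finA cV' less.prems(5) by simp
    have sub': "A' \<subseteq> V' \<times> V'"
    proof
      fix b assume b: "b \<in> A'"
      then have "b \<in> A" "b \<noteq> a" unfolding A'_def by auto
      then have "fst b \<noteq> v" "snd b \<noteq> v" using key by blast+
      then show "b \<in> V' \<times> V'" using \<open>b \<in> A\<close> less.prems(2) unfolding V'_def by auto
    qed
    have e1: "(z,y) \<in> undir A \<Longrightarrow> z \<noteq> v \<Longrightarrow> y \<noteq> v \<Longrightarrow> (z,y) \<in> undir A'" for z y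
      using aw unfolding undir_def A'_def by auto
    have e2: "(z,v) \<in> undir A \<Longrightarrow> z = w" for z
      using aw key less.prems(3) unfolding undir_def by (metis converse_iff fst_conv snd_conv Un_iff)
    have e3: "(v,y) \<in> undir A \<Longrightarrow> y = w" for y
      using aw key less.prems(3) unfolding undir_def by (metis converse_iff fst_conv snd_conv Un_iff)
    have conn: "(x,y) \<in> (undir A)\<^sup>* \<Longrightarrow> x \<in> V' \<Longrightarrow>
        (y \<noteq> v \<longrightarrow> (x,y) \<in> (undir A')\<^sup>*) \<and> (y = v \<longrightarrow> (x,w) \<in> (undir A')\<^sup>*)" for x y
    proof (induction rule: rtrancl_induct)
      case base then show ?case unfolding V'_def by auto
    next
      case (step z y)
      show ?case
      proof (cases "z = v")
        case True
        then show ?thesis using step e3 by auto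
      next
        case False
        then show ?thesis using step e1 e2 by (metis rtrancl.rtrancl_into_rtrancl)
      qed
    qed
    have conn': "\<forall>x\<in>V'. \<forall>y\<in>V'. (x,y) \<in> (undir A')\<^sup>*"
      using conn less.prems(4) unfolding V'_def by blast
    have "\<exists>f::'a \<Rightarrow> int. \<forall>x y. (x,y) \<in> A' \<longrightarrow> f y = f x + 1"
      using less.hyps[of V' A'] cV' n2 less.prems(1,3) sub' conn' cA' unfolding V'_def A'_def
      by auto
    then obtain f' :: "'a \<Rightarrow> int" where f': "\<forall>x y. (x,y) \<in> A' \<longrightarrow> f' y = f' x + 1" by blast
    define f where "f = f'(v := if a = (v,w) then f' w - 1 else f' w + 1)"
    have "\<forall>x y. (x,y) \<in> A \<longrightarrow> f y = f x + 1"
    proof (intro allI impI)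
      fix x y assume xy: "(x,y) \<in> A"
      show "f y = f x + 1"
      proof (cases "(x,y) = a")
        case True
        then show ?thesis using aw unfolding f_def by auto
      next
        case False
        then have "(x,y) \<in> A'" "x \<noteq> v" "y \<noteq> v" using xy key unfolding A'_def by auto
        then show ?thesis using f' unfolding f_def by auto
      qed
    qed
    then show ?thesis by blast
  qed
qed



lemma tree_hom_dipath:
  assumes "oriented_tree T" shows "\<exists>h. hom_to T (dipath h)"
proof -
  have T: "finite (verts T)" "arcs T \<subseteq> verts T \<times> verts T" "verts T \<noteq> {}"
     "\<forall>x. (x,x) \<notin> arcs T" "\<forall>x\<in>verts T. \<forall>y\<in>verts T. (x,y) \<in> (undir (arcs T))\<^sup>*"
     "card (arcs T) = card (verts T) - 1"
    using assms unfolding oriented_tree_def wf_digraph_def by auto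
  obtain f :: "'a \<Rightarrow> int" where f: "\<forall>x y. (x,y) \<in> arcs T \<longrightarrow> f y = f x + 1"
    using tree_potential[OF T(1,2,4,5,6)] by blast
  define m where "m = Min (f ` verts T)"
  define g where "g x = nat (f x - m)" for x
  define h where "h = Max (g ` verts T)"
  have mle: "x \<in> verts T \<Longrightarrow> m \<le> f x" for x unfolding m_def using T(1) by simp
  have gle: "x \<in> verts T \<Longrightarrow> g x \<le> h" for x unfolding h_def using T(1) by simp
  have "is_hom T (dipath h) g"
    unfolding is_hom_def dipath_def verts_def[symmetric] arcs_def[symmetric]
  proof (intro conjI allI impI)
    show "g ` verts T \<subseteq> verts ({0..h}, {(i, Suc i) |i. i < h})"
      using gle by (auto simp: verts_def)
  next
    fix x y assume xy: "(x,y) \<in> arcs T"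
    then have "x \<in> verts T" "y \<in> verts T" using T(2) by auto
    then have "m \<le> f x" "g y \<le> h" using mle gle by auto
    moreover have "f y = f x + 1" using f xy by auto
    ultimately have "g y = Suc (g x)" "g x < h" unfolding g_def by auto
    then show "(g x, g y) \<in> arcs ({0..h}, {(i, Suc i) |i. i < h})" by (auto simp: arcs_def)
  qed
  then show ?thesis unfolding hom_to_def by blast
qed

lemma height_arc:
  assumes "oriented_tree T" "(x,y) \<in> arcs T"
  shows "height_map T y = Suc (height_map T x)"
proof -
  have "hom_to T (dipath (alg_height T))"
    unfolding alg_height_def using tree_hom_dipath[OF assms(1)] by (rule LeastI_ex)
  then have "is_hom T (dipath (alg_height T)) (height_map T)"
    unfolding hom_to_def height_map_def by (rule someI_ex)
  then have "(height_map T x, height_map T y) \<in> arcs (dipath (alg_height T))"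
    using assms(2) unfolding is_hom_def by auto
  then show ?thesis by (auto simp: dipath_def arcs_def)
qed

definition Lam :: "nat digraph \<Rightarrow> nat digraph" where
  "Lam G = ((\<lambda>v. 2*v) ` verts G \<union> (\<lambda>v. 2*v+1) ` verts G,
     {(2*v, 2*v+1) | v. v \<in> verts G} \<union> {(2*u+1, 2*v) | u v. (u,v) \<in> arcs G})"

lemma Lam_verts: "n \<in> verts (Lam G) \<longleftrightarrow> n div 2 \<in> verts G"
proof
  assume "n \<in> verts (Lam G)" then show "n div 2 \<in> verts G"
    by (auto simp: Lam_def verts_def)
next
  assume a: "n div 2 \<in> verts G"
  have "n = 2*(n div 2) \<or> n = 2*(n div 2)+1" by presburger
  then show "n \<in> verts (Lam G)" using a unfolding Lam_def verts_def by auto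
qed

lemma Lam_arcs: "(m,n) \<in> arcs (Lam G) \<longleftrightarrow>
   (even m \<and> n = Suc m \<and> m div 2 \<in> verts G) \<or> (odd m \<and> even n \<and> (m div 2, n div 2) \<in> arcs G)"
proof
  assume "(m,n) \<in> arcs (Lam G)" then show "(even m \<and> n = Suc m \<and> m div 2 \<in> verts G) \<or> (odd m \<and> even n \<and> (m div 2, n div 2) \<in> arcs G)"
    by (auto simp: Lam_def arcs_def)
next
  assume a: "(even m \<and> n = Suc m \<and> m div 2 \<in> verts G) \<or> (odd m \<and> even n \<and> (m div 2, n div 2) \<in> arcs G)"
  show "(m,n) \<in> arcs (Lam G)"
  proof (cases "even m")
    case True
    then have "m = 2*(m div 2)" "n = 2*(m div 2)+1" "m div 2 \<in> verts G" using a by auto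
    then show ?thesis unfolding Lam_def arcs_def by auto
  next
    case False
    then have "m = 2*(m div 2)+1" "n = 2*(n div 2)" "(m div 2, n div 2) \<in> arcs G" using a by auto
    then have "(m,n) = (2*(m div 2)+1, 2*(n div 2)) \<and> (m div 2, n div 2) \<in> arcs G" by simp
    then show ?thesis unfolding Lam_def by (simp add: arcs_def) blast
  qed
qed

lemma wf_Lam: assumes "wf_digraph G" shows "wf_digraph (Lam G)"
proof -
  have "finite (verts (Lam G))" using assms unfolding wf_digraph_def Lam_def verts_def by auto
  moreover have "arcs (Lam G) \<subseteq> verts (Lam G) \<times> verts (Lam G)"
  proof clarify
    fix m n assume "(m,n) \<in> arcs (Lam G)"
    then have "(even m \<and> n = Suc m \<and> m div 2 \<in> verts G) \<or> (odd m \<and> even n \<and> (m div 2, n div 2) \<in> arcs G)"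
      by (simp add: Lam_arcs)
    then have "m div 2 \<in> verts G \<and> n div 2 \<in> verts G" using assms unfolding wf_digraph_def by auto
    then show "m \<in> verts (Lam G) \<and> n \<in> verts (Lam G)" by (simp add: Lam_verts)
  qed
  ultimately show ?thesis unfolding wf_digraph_def by blast
qed

lemma Psi_verts: "verts (Psi H) = arcs H" by (simp add: Psi_def verts_def arcs_def)
lemma Psi_arcs: "((a,b),(c,d)) \<in> arcs (Psi H) \<longleftrightarrow> (a,b)\<in>arcs H \<and> (c,d)\<in>arcs H \<and> (b,c)\<in>arcs H"
  by (simp add: Psi_def arcs_def)

lemma L1:
  assumes H: "wf_digraph H" and G: "wf_digraph G"
  shows "hom_to G (Psi H) \<longleftrightarrow> hom_to (Lam G) H"
proof
  assume "hom_to G (Psi H)"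
  then obtain f where f: "is_hom G (Psi H) f" unfolding hom_to_def by blast
  define k where "k n = (if even n then fst (f (n div 2)) else snd (f (n div 2)))" for n
  have fv: "v \<in> verts G \<Longrightarrow> f v \<in> arcs H" for v using f unfolding is_hom_def Psi_verts by auto
  have "is_hom (Lam G) H k"
    unfolding is_hom_def
  proof (intro conjI allI impI)
    show "k ` verts (Lam G) \<subseteq> verts H"
    proof clarify
      fix n assume "n \<in> verts (Lam G)"
      then have "f (n div 2) \<in> arcs H" using fv Lam_verts by auto
      then show "k n \<in> verts H" using H unfolding wf_digraph_def k_def by (cases "f (n div 2)") auto
    qed
  next
    fix m n assume "(m,n) \<in> arcs (Lam G)"
    then have c: "(even m \<and> n = Suc m \<and> m div 2 \<in> verts G) \<or> (odd m \<and> even n \<and> (m div 2, n div 2) \<in> arcs G)"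
      by (simp add: Lam_arcs)
    show "(k m, k n) \<in> arcs H"
    proof (cases "even m")
      case True
      then have "n = Suc m" "m div 2 \<in> verts G" "Suc m div 2 = m div 2" using c by auto
      then show ?thesis using fv[of "m div 2"] True unfolding k_def by auto
    next
      case False
      then have e: "even n" "(m div 2, n div 2) \<in> arcs G" using c by auto
      then have "(f (m div 2), f (n div 2)) \<in> arcs (Psi H)" using f unfolding is_hom_def by auto
      then show ?thesis using False e unfolding k_def
        by (cases "f (m div 2)"; cases "f (n div 2)") (auto simp: Psi_arcs)
    qed
  qed
  then show "hom_to (Lam G) H" unfolding hom_to_def by blast
next
  assume "hom_to (Lam G) H"
  then obtain k where k: "is_hom (Lam G) H k" unfolding hom_to_def by blast
  define f where "f v = (k (2*v), k (2*v+1))" for v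
  have fv: "v \<in> verts G \<Longrightarrow> f v \<in> arcs H" for v
  proof -
    assume "v \<in> verts G"
    then have "(2*v, 2*v+1) \<in> arcs (Lam G)" by (simp add: Lam_arcs)
    then show ?thesis using k unfolding is_hom_def f_def by auto
  qed
  have "is_hom G (Psi H) f"
    unfolding is_hom_def
  proof (intro conjI allI impI)
    show "f ` verts G \<subseteq> verts (Psi H)" using fv unfolding Psi_verts by auto
  next
    fix u v assume uv: "(u,v) \<in> arcs G"
    then have "u \<in> verts G" "v \<in> verts G" using G unfolding wf_digraph_def by auto
    moreover have "(2*u+1, 2*v) \<in> arcs (Lam G)" using uv by (simp add: Lam_arcs)
    then have "(k (2*u+1), k (2*v)) \<in> arcs H" using k unfolding is_hom_def by auto
    ultimately show "(f u, f v) \<in> arcs (Psi H)" using fv unfolding f_def by (simp add: Psi_arcs)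
  qed
  then show "hom_to G (Psi H)" unfolding hom_to_def by blast
qed



definition Sp :: "'a digraph \<Rightarrow> nat \<Rightarrow> ('a \<times> 'a) set" where
  "Sp T p = {(x,y). (x,y) \<in> arcs T \<and> even (height_map T x + p)}"

lemma sim_b_Sp: "sim_b T = path_equiv T (Sp T 0)"
  by (simp add: sim_b_def blue_arcs_def Sp_def)
lemma sim_r_Sp: "sim_r T = path_equiv T (Sp T 1)"
  by (simp add: sim_r_def red_arcs_def Sp_def)

lemma equiv_pe: "equiv (verts T) (path_equiv T S)"
proof (rule equivI)
  show "path_equiv T S \<subseteq> verts T \<times> verts T" unfolding path_equiv_def by auto
  show "refl_on (verts T) (path_equiv T S)" unfolding refl_on_def path_equiv_def by auto
  show "sym (path_equiv T S)" unfolding sym_def path_equiv_def using undir_sym_rtrancl by fast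
  show "trans (path_equiv T S)" unfolding trans_def path_equiv_def by (auto intro: rtrancl_trans)
qed

lemma class_of:
  assumes "X \<in> verts T // path_equiv T S" "x \<in> X"
  shows "X = path_equiv T S `` {x}" "x \<in> verts T"
proof -
  obtain x0 where X: "X = path_equiv T S `` {x0}" "x0 \<in> verts T" using assms(1) by (rule quotientE)
  then have "(x0,x) \<in> path_equiv T S" using assms(2) by auto
  then show "X = path_equiv T S `` {x}" "x \<in> verts T"
    using X equiv_class_eq_iff[OF equiv_pe[of T S], of x0 x] by auto
qed

lemma quot_verts: "verts (quot_noloops T R) = verts T // R"
  by (simp add: quot_noloops_def verts_def)
lemma quot_arcs: "(X,Y) \<in> arcs (quot_noloops T R) \<longleftrightarrow>
   X \<in> verts T // R \<and> Y \<in> verts T // R \<and> X \<noteq> Y \<and> (\<exists>x\<in>X. \<exists>y\<in>Y. (x, y) \<in> arcs T)"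
  by (simp add: quot_noloops_def arcs_def)

lemma quot_to_Lam:
  assumes T: "oriented_tree T"
    and g: "hom_to (quot_noloops T (path_equiv T (Sp T p))) G"
  shows "hom_to T (Lam G)"
proof -
  define R where "R = path_equiv T (Sp T p)"
  define t where "t = height_map T"
  have eq: "equiv (verts T) R" unfolding R_def by (rule equiv_pe)
  obtain g where g: "is_hom (quot_noloops T R) G g" using g unfolding hom_to_def R_def by blast
  have wfT: "arcs T \<subseteq> verts T \<times> verts T" using T unfolding oriented_tree_def wf_digraph_def by auto
  have tarc: "(x,y) \<in> arcs T \<Longrightarrow> t y = Suc (t x)" for x y using height_arc[OF T] t_def by auto
  define \<phi> where "\<phi> x = (if even (t x + p) then 2 * g (R``{x}) else 2 * g (R``{x}) + 1)" for x
  have gv: "x \<in> verts T \<Longrightarrow> g (R``{x}) \<in> verts G" for x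
    using g quotientI[of x "verts T" R] unfolding is_hom_def quot_verts by auto
  have "is_hom T (Lam G) \<phi>"
    unfolding is_hom_def
  proof (intro conjI allI impI)
    show "\<phi> ` verts T \<subseteq> verts (Lam G)"
      using gv unfolding \<phi>_def by (auto simp: Lam_verts)
  next
    fix x y assume xy: "(x,y) \<in> arcs T"
    then have xv: "x \<in> verts T" "y \<in> verts T" using wfT by auto
    have ty: "t y = Suc (t x)" using tarc xy by auto
    show "(\<phi> x, \<phi> y) \<in> arcs (Lam G)"
    proof (cases "even (t x + p)")
      case True
      then have "(x,y) \<in> Sp T p" using xy unfolding Sp_def t_def by auto
      then have "(x,y) \<in> R" using xv unfolding R_def path_equiv_def undir_def by auto
      then have "R``{x} = R``{y}" using equiv_class_eq_iff[OF eq] by simp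
      moreover have "odd (t y + p)" using True ty by simp
      ultimately have "\<phi> x = 2 * g (R``{x})" "\<phi> y = Suc (2 * g (R``{x}))"
        using True unfolding \<phi>_def by auto
      then show ?thesis using gv[OF xv(1)] by (simp add: Lam_arcs)
    next
      case False
      have ey: "even (t y + p)" using False ty by simp
      have neq: "R``{x} \<noteq> R``{y}"
      proof
        assume "R``{x} = R``{y}"
        then have "(x,y) \<in> R" using equiv_class_eq_iff[OF eq] xv by simp
        then have "(x,y) \<in> (undir (Sp T p))\<^sup>*" unfolding R_def path_equiv_def by auto
        moreover have "(t a + p) div 2 = (t b + p) div 2" if "(a,b) \<in> Sp T p" for a b
        proof -
          have "t b = Suc (t a)" "even (t a + p)" using that tarc unfolding Sp_def t_def by auto
          then show ?thesis by presburger
        qed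
        ultimately have "(t x + p) div 2 = (t y + p) div 2" by (rule inv_walk[where F="\<lambda>u. (t u + p) div 2"])
        then show False using False ty by presburger
      qed
      have "(R``{x}, R``{y}) \<in> arcs (quot_noloops T R)"
      proof -
        have "R``{x} \<in> verts T // R" "R``{y} \<in> verts T // R" using xv by (auto intro: quotientI)
        moreover have "x \<in> R``{x}" "y \<in> R``{y}" using xv equiv_class_self[OF eq] by auto
        ultimately show ?thesis unfolding quot_arcs using neq xy by blast
      qed
      then have "(g (R``{x}), g (R``{y})) \<in> arcs G" using g unfolding is_hom_def by auto
      moreover have "\<phi> x = 2 * g (R``{x}) + 1" "\<phi> y = 2 * g (R``{y})"
        using False ey unfolding \<phi>_def by auto
      ultimately show ?thesis by (simp add: Lam_arcs)
    qed
  qed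
  then show ?thesis unfolding hom_to_def by blast
qed



lemma Lam_to_quot:
  assumes T: "oriented_tree T" and hom: "hom_to T (Lam G)"
  shows "\<exists>p\<in>{0,1}. hom_to (quot_noloops T (path_equiv T (Sp T p))) G"
proof -
  define t where "t = height_map T"
  obtain \<phi> where \<phi>: "is_hom T (Lam G) \<phi>" using hom unfolding hom_to_def by blast
  have wfT: "arcs T \<subseteq> verts T \<times> verts T" using T unfolding oriented_tree_def wf_digraph_def by auto
  have tarc: "(x,y) \<in> arcs T \<Longrightarrow> t y = Suc (t x)" for x y using height_arc[OF T] t_def by auto
  have conn: "\<forall>x\<in>verts T. \<forall>y\<in>verts T. (x,y) \<in> (undir (arcs T))\<^sup>*" and ne: "verts T \<noteq> {}"
    using T unfolding oriented_tree_def by auto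
  obtain x0 where x0: "x0 \<in> verts T" using ne by auto
  define p where "p = (\<phi> x0 + t x0) mod 2"
  have larc: "(x,y) \<in> arcs T \<Longrightarrow> (even (\<phi> x) \<and> \<phi> y = Suc (\<phi> x) \<and> \<phi> x div 2 \<in> verts G) \<or>
     (odd (\<phi> x) \<and> even (\<phi> y) \<and> (\<phi> x div 2, \<phi> y div 2) \<in> arcs G)" for x y
    using \<phi> unfolding is_hom_def by (simp add: Lam_arcs[symmetric])
  have par: "x \<in> verts T \<Longrightarrow> (\<phi> x + t x) mod 2 = p" for x
  proof -
    assume "x \<in> verts T"
    then have "(x0,x) \<in> (undir (arcs T))\<^sup>*" using conn x0 by auto
    moreover have "(\<phi> a + t a) mod 2 = (\<phi> b + t b) mod 2" if "(a,b) \<in> arcs T" for a b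
    proof -
      have d: "\<phi> b = Suc (\<phi> a) \<or> (odd (\<phi> a) \<and> even (\<phi> b))" using larc[OF that] by blast
      have "t b = Suc (t a)" using tarc[OF that] .
      moreover have "odd (u::nat) \<Longrightarrow> even v \<Longrightarrow> (u + s) mod 2 = (v + Suc s) mod 2" for u v s
        by presburger
      ultimately show ?thesis using d by auto
    qed
    ultimately have "(\<phi> x0 + t x0) mod 2 = (\<phi> x + t x) mod 2" by (rule inv_walk[where F="\<lambda>u. (\<phi> u + t u) mod 2"])
    then show ?thesis unfolding p_def by simp
  qed
  have evc: "(x,y) \<in> arcs T \<Longrightarrow> even (t x + p) \<Longrightarrow> \<phi> x div 2 = \<phi> y div 2" for x y
  proof -
    assume a: "(x,y) \<in> arcs T" "even (t x + p)"
    have "(\<phi> x + t x) mod 2 = p" using par[of x] wfT a(1) by auto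
    then have "even (\<phi> x)" using a(2) by presburger
    then show ?thesis using larc[OF a(1)] by auto
  qed
  have odc: "(x,y) \<in> arcs T \<Longrightarrow> odd (t x + p) \<Longrightarrow> (\<phi> x div 2, \<phi> y div 2) \<in> arcs G" for x y
  proof -
    assume a: "(x,y) \<in> arcs T" "odd (t x + p)"
    have "(\<phi> x + t x) mod 2 = p" using par[of x] wfT a(1) by auto
    then have "odd (\<phi> x)" using a(2) by presburger
    then show ?thesis using larc[OF a(1)] by auto
  qed
  define R where "R = path_equiv T (Sp T p)"
  have eq: "equiv (verts T) R" unfolding R_def by (rule equiv_pe)
  define g where "g X = \<phi> (SOME x. x \<in> X) div 2" for X
  have gX: "X \<in> verts T // R \<Longrightarrow> x \<in> X \<Longrightarrow> g X = \<phi> x div 2" for X x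
  proof -
    assume a: "X \<in> verts T // R" "x \<in> X"
    define z where "z = (SOME x. x \<in> X)"
    have "z \<in> X" unfolding z_def using a(2) by (rule someI)
    then have "(x,z) \<in> R" using class_of[OF a[unfolded R_def]] unfolding R_def by auto
    then have "(x,z) \<in> (undir (Sp T p))\<^sup>*" unfolding R_def path_equiv_def by auto
    then have "\<phi> x div 2 = \<phi> z div 2"
      by (rule inv_walk[where F="\<lambda>u. \<phi> u div 2"]) (use evc in \<open>auto simp: Sp_def t_def\<close>)
    then show ?thesis unfolding g_def z_def by simp
  qed
  have "is_hom (quot_noloops T R) G g"
    unfolding is_hom_def
  proof (intro conjI allI impI)
    show "g ` verts (quot_noloops T R) \<subseteq> verts G"
    proof clarify
      fix X assume X: "X \<in> verts (quot_noloops T R)"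
      then have X': "X \<in> verts T // R" by (simp add: quot_verts)
      then obtain x where x: "X = R``{x}" "x \<in> verts T" by (rule quotientE)
      then have "x \<in> X" using equiv_class_self[OF eq] by auto
      then have "g X = \<phi> x div 2" using gX X' by auto
      moreover have "\<phi> x \<in> verts (Lam G)" using \<phi> x(2) unfolding is_hom_def by auto
      ultimately show "g X \<in> verts G" by (simp add: Lam_verts)
    qed
  next
    fix X Y assume "(X,Y) \<in> arcs (quot_noloops T R)"
    then obtain x y where q: "X \<in> verts T // R" "Y \<in> verts T // R" "X \<noteq> Y" "x \<in> X" "y \<in> Y"
      "(x,y) \<in> arcs T" unfolding quot_arcs by blast
    have X: "X = R``{x}" "x \<in> verts T" using class_of[OF q(1)[unfolded R_def] q(4)] unfolding R_def by auto
    have Y: "Y = R``{y}" "y \<in> verts T" using class_of[OF q(2)[unfolded R_def] q(5)] unfolding R_def by auto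
    have "odd (t x + p)"
    proof
      assume "even (t x + p)"
      then have "(x,y) \<in> Sp T p" using q(6) unfolding Sp_def t_def by auto
      then have "(x,y) \<in> R" using X Y unfolding R_def path_equiv_def undir_def by auto
      then have "X = Y" using X Y equiv_class_eq_iff[OF eq] by simp
      then show False using q(3) by simp
    qed
    then have "(\<phi> x div 2, \<phi> y div 2) \<in> arcs G" using odc q(6) by auto
    then show "(g X, g Y) \<in> arcs G" using gX q by auto
  qed
  moreover have "p \<in> {0,1}" unfolding p_def by auto
  ultimately show ?thesis unfolding hom_to_def R_def by blast
qed

lemma L2:
  assumes "oriented_tree T"
  shows "hom_to T (Lam G) \<longleftrightarrow>
    hom_to (quot_noloops T (sim_b T)) G \<or> hom_to (quot_noloops T (sim_r T)) G"
proof -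
  have "hom_to T (Lam G) \<longleftrightarrow> (\<exists>p\<in>{0,1}. hom_to (quot_noloops T (path_equiv T (Sp T p))) G)"
    using Lam_to_quot[OF assms, of G] quot_to_Lam[OF assms, of _ G] by blast
  also have "\<dots> \<longleftrightarrow> hom_to (quot_noloops T (path_equiv T (Sp T 0))) G \<or> hom_to (quot_noloops T (path_equiv T (Sp T 1))) G"
    by simp
  finally show ?thesis unfolding sim_b_Sp sim_r_Sp .
qed

theorem mainTheorem12:
  fixes H :: "'h digraph" and \<T> :: "'a digraph set"
  assumes "wf_digraph H"
    and "\<forall>T\<in>\<T>. oriented_tree T"
    and "complete_obs \<T> H"
  shows "complete_obs (Psi_sproink \<T>) (Psi H)"
  unfolding complete_obs_def
proof (intro allI impI)
  fix G :: "nat digraph" assume G: "wf_digraph G"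
  have "hom_to G (Psi H) \<longleftrightarrow> hom_to (Lam G) H" by (rule L1[OF assms(1) G])
  also have "\<dots> \<longleftrightarrow> \<not> (\<exists>T\<in>\<T>. hom_to T (Lam G))"
    using assms(3) wf_Lam[OF G] unfolding complete_obs_def by blast
  also have "(\<exists>T\<in>\<T>. hom_to T (Lam G)) \<longleftrightarrow> (\<exists>Q\<in>Psi_sproink \<T>. hom_to Q G)"
  proof -
    have e: "\<forall>T\<in>\<T>. hom_to T (Lam G) \<longleftrightarrow>
        hom_to (quot_noloops T (sim_b T)) G \<or> hom_to (quot_noloops T (sim_r T)) G"
      using L2[of _ G] assms(2) by blast
    show ?thesis unfolding Psi_sproink_def image_Un[symmetric] Bex_def image_iff Un_iff
      using e by blast
  qed
  finally show "hom_to G (Psi H) \<longleftrightarrow> \<not> (\<exists>Q\<in>Psi_sproink \<T>. hom_to Q G)" .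
qed

end
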